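(* Let $q \geq 3$ and $n$ be integers, and let $1 \leq d \leq n/3$. Let $\mathcal{A} \subseteq [q]^n$ be such that for all $x^{(1)}=(x^{(1)}_1, \ldots, x^{(1)}_n)$, $x^{(2)}=(x^{(2)}_1, \ldots, x^{(2)}_n) \in \mathcal{A}$, $|\{i \in [n] \mid x^{(1)}_i = x^{(2)}_i\}| \geq d$. Then $|\mathcal{A}| < q^{\,n-\frac{d}{10}}$.
   Context: $[q]=\{1,\dots,q\}$. *)

theory Defs
  imports "HOL-Analysis.Analysis"
begin

definition words :: "nat \<Rightarrow> nat \<Rightarrow> (nat \<Rightarrow> nat) set" where
  "words q n = PiE {0..<n} (\<lambda>_. {1..q})"

definition agree :: "nat \<Rightarrow> (nat \<Rightarrow> nat) \<Rightarrow> (nat \<Rightarrow> nat) \<Rightarrow> nat" where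
  "agree n x y = card {i \<in> {0..<n}. x i = y i}"

end

theory Submission
  imports Defs
begin

type_synonym w = "nat \<Rightarrow> nat"

definition shf :: "(w \<Rightarrow> bool) \<Rightarrow> (w \<Rightarrow> w) \<Rightarrow> w set \<Rightarrow> w \<Rightarrow> w" where
  "shf C t A x = (if C x \<and> t x \<notin> A then t x else x)"

lemma shf_inj:
  assumes "inj_on t {x. C x}"
  shows "inj_on (shf C t A) A"
proof (rule inj_onI)
  fix x y assume xy: "x \<in> A" "y \<in> A" "shf C t A x = shf C t A y"
  show "x = y"
  proof (cases "C x \<and> t x \<notin> A")
    case True
    show ?thesis
    proof (cases "C y \<and> t y \<notin> A")
      case True2: True
      then show ?thesis using True xy assms by (auto simp: shf_def inj_on_def)
    next
      case False
      then show ?thesis using True xy by (auto simp: shf_def)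
    qed
  next
    case False
    then show ?thesis using xy by (auto simp: shf_def split: if_splits)
  qed
qed

lemma shf_card:
  assumes "inj_on t {x. C x}"
  shows "card (shf C t A ` A) = card A"
  using shf_inj[OF assms] by (simp add: card_image)

lemma shf_pot:
  assumes "inj_on t {x. C x}" "finite A"
    and "\<And>x. C x \<Longrightarrow> (h::w\<Rightarrow>nat) x < h (t x)"
    and "\<exists>x\<in>A. C x \<and> t x \<notin> A"
  shows "(\<Sum>x\<in>A. h x) < (\<Sum>x\<in>shf C t A ` A. h x)"
proof -
  have "(\<Sum>x\<in>shf C t A ` A. h x) = (\<Sum>x\<in>A. h (shf C t A x))"
    using shf_inj[OF assms(1)] by (simp add: sum.reindex)
  moreover have "(\<Sum>x\<in>A. h x) < (\<Sum>x\<in>A. h (shf C t A x))"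
    using sum_strict_mono_ex1[OF assms(2), of h "\<lambda>x. h (shf C t A x)"]
      assms(3,4) by (auto simp: shf_def less_imp_le)
  ultimately show ?thesis by simp
qed

lemma shf_sub:
  assumes "A \<subseteq> W" "\<And>x. x \<in> W \<Longrightarrow> C x \<Longrightarrow> t x \<in> W"
  shows "shf C t A ` A \<subseteq> W"
  using assms by (auto simp: shf_def)

lemma shf_rel:
  assumes R: "\<forall>x\<in>A. \<forall>y\<in>A. R x y"
    and sym: "\<And>x y. R x y \<Longrightarrow> R y x"
    and a: "\<And>x y. C x \<Longrightarrow> C y \<Longrightarrow> R x y \<Longrightarrow> R (t x) (t y)"
    and b: "\<And>x y. C x \<Longrightarrow> C y \<Longrightarrow> R x (t y) \<Longrightarrow> R (t x) y"
    and c: "\<And>x y. C x \<Longrightarrow> \<not> C y \<Longrightarrow> R x y \<Longrightarrow> R (t x) y"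
  shows "\<forall>x\<in>shf C t A ` A. \<forall>y\<in>shf C t A ` A. R x y"
proof -
  have one: "R (shf C t A x) y" if "x \<in> A" "y \<in> A" "shf C t A y = y" for x y
  proof (cases "C x \<and> t x \<notin> A")
    case False then show ?thesis using that R by (simp add: shf_def)
  next
    case True
    show ?thesis
    proof (cases "C y")
      case True2: True
      then have "t y \<in> A" using that(2,3) by (auto simp: shf_def split: if_splits)
      then have "R x (t y)" using R that by blast
      then show ?thesis using b True True2 by (simp add: shf_def)
    next
      case False
      then show ?thesis using c True R that by (simp add: shf_def)
    qed
  qed
  show ?thesis
  proof (intro ballI)
    fix u v assume "u \<in> shf C t A ` A" "v \<in> shf C t A ` A"
    then obtain x y where xy: "x \<in> A" "y \<in> A" "u = shf C t A x" "v = shf C t A y" by blast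
    show "R u v"
    proof (cases "shf C t A y = y")
      case True then show ?thesis using one xy by simp
    next
      case F1: False
      show ?thesis
      proof (cases "shf C t A x = x")
        case True then show ?thesis using one[of y x] xy sym by simp
      next
        case False
        then have "C x" "C y" "shf C t A x = t x" "shf C t A y = t y" using F1
          by (auto simp: shf_def split: if_splits)
        then show ?thesis using a R xy by simp
      qed
    qed
  qed
qed


definition agree1 :: "nat \<Rightarrow> w \<Rightarrow> w \<Rightarrow> nat" where
  "agree1 n x y = card {i \<in> {0..<n}. x i = 1 \<and> y i = 1}"

lemma card_split:
  assumes "finite I" "j \<in> I"
  shows "card {i\<in>I. P i} = card {i\<in>I-{j}. P i} + (if P j then 1 else 0)"
proof (cases "P j")
  case True
  have "{i\<in>I. P i} = insert j {i\<in>I-{j}. P i}" using True assms by auto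
  then show ?thesis using assms True by simp
next
  case False
  have "{i\<in>I. P i} = {i\<in>I-{j}. P i}" using False assms by auto
  then show ?thesis using False by simp
qed

lemma card_cong_set: "(\<And>i. i \<in> I \<Longrightarrow> P i = Q i) \<Longrightarrow> card {i\<in>I. P i} = card {i\<in>I. Q i}"
  by (metis (mono_tags, lifting) Collect_cong)

lemma words_finite: "finite (words q n)"
  by (simp add: words_def finite_PiE)

lemma words_card: "card (words q n) = q ^ n"
  by (simp add: words_def card_PiE)

lemma words_out: "x \<in> words q n \<Longrightarrow> \<not> i < n \<Longrightarrow> x i = undefined"
  by (auto simp: words_def PiE_def extensional_def)

lemma words_in: "x \<in> words q n \<Longrightarrow> i < n \<Longrightarrow> x i \<in> {1..q}"
  by (auto simp: words_def PiE_def Pi_def)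

lemma words_upd: "x \<in> words q n \<Longrightarrow> i < n \<Longrightarrow> v \<in> {1..q} \<Longrightarrow> x(i := v) \<in> words q n"
  by (auto simp: words_def PiE_def Pi_def extensional_def)

lemma words_restrict: "x \<in> words q (Suc n) \<Longrightarrow> restrict x {0..<n} \<in> words q n"
  by (auto simp: words_def PiE_def Pi_def extensional_def)

lemma agree1_Suc: "agree1 (Suc n) x y = agree1 n x y + (if x n = 1 \<and> y n = 1 then 1 else 0)"
proof -
  have "agree1 (Suc n) x y = card {i\<in>{0..<Suc n}-{n}. x i = 1 \<and> y i = 1} + (if x n = 1 \<and> y n = 1 then 1 else 0)"
    unfolding agree1_def by (rule card_split) auto
  moreover have "{0..<Suc n}-{n} = {0..<n}" by auto
  ultimately show ?thesis by (simp add: agree1_def)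
qed

lemma agree1_restrict: "agree1 n (restrict x {0..<n}) (restrict y {0..<n}) = agree1 n x y"
  unfolding agree1_def by (rule card_cong_set) auto

definition tau2 :: "nat \<Rightarrow> nat \<Rightarrow> w \<Rightarrow> w" where
  "tau2 j n x = x(j := x n, n := 1)"

definition C2 :: "nat \<Rightarrow> nat \<Rightarrow> w \<Rightarrow> bool" where
  "C2 j n x = (x j = 1 \<and> x n \<noteq> 1)"

lemma tau2_inj: "j < n \<Longrightarrow> inj_on (tau2 j n) {x. C2 j n x}"
proof (rule inj_onI)
  fix x y assume "j < n" "x \<in> {x. C2 j n x}" "y \<in> {x. C2 j n x}" "tau2 j n x = tau2 j n y"
  then have e: "\<And>i. tau2 j n x i = tau2 j n y i" "x j = 1" "y j = 1" by (auto simp: C2_def)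
  show "x = y"
  proof
    fix i
    show "x i = y i"
      using e(1)[of i] e(1)[of j] e(2,3) \<open>j < n\<close>
      by (cases "i = j"; cases "i = n") (auto simp: tau2_def)
  qed
qed

lemma agree1_decomp:
  assumes "j < n"
  shows "agree1 (Suc n) x y = card {i\<in>{0..<Suc n}-{j}-{n}. x i = 1 \<and> y i = 1}
     + (if x j = 1 \<and> y j = 1 then 1 else 0) + (if x n = 1 \<and> y n = 1 then 1 else 0)"
proof -
  have "agree1 (Suc n) x y = card {i\<in>{0..<Suc n}-{j}. x i = 1 \<and> y i = 1} + (if x j = 1 \<and> y j = 1 then 1 else 0)"
    unfolding agree1_def by (rule card_split) (use assms in auto)
  moreover have "card {i\<in>{0..<Suc n}-{j}. x i = 1 \<and> y i = 1} = card {i\<in>{0..<Suc n}-{j}-{n}. x i = 1 \<and> y i = 1} + (if x n = 1 \<and> y n = 1 then 1 else 0)"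
    by (rule card_split) (use assms in auto)
  ultimately show ?thesis by simp
qed

lemma core_tau2:
  "card {i\<in>{0..<Suc n}-{j}-{n}. tau2 j n x i = 1 \<and> y i = 1} = card {i\<in>{0..<Suc n}-{j}-{n}. x i = 1 \<and> y i = 1}"
  "card {i\<in>{0..<Suc n}-{j}-{n}. y i = 1 \<and> tau2 j n x i = 1} = card {i\<in>{0..<Suc n}-{j}-{n}. y i = 1 \<and> x i = 1}"
  by (rule card_cong_set; simp add: tau2_def)+

lemma tau2_rel:
  assumes "j < n"
  shows "\<forall>x\<in>A. \<forall>y\<in>A. d \<le> agree1 (Suc n) x y \<Longrightarrow>
     \<forall>x\<in>shf (C2 j n) (tau2 j n) A ` A. \<forall>y\<in>shf (C2 j n) (tau2 j n) A ` A. d \<le> agree1 (Suc n) x y"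
proof (rule shf_rel)
  have sy: "agree1 m x y = agree1 m y x" for m x y unfolding agree1_def by (rule card_cong_set) auto
  show "d \<le> agree1 (Suc n) y x" if "d \<le> agree1 (Suc n) x y" for x y using that sy by simp
  note D = agree1_decomp[OF assms]
  have nj: "j \<noteq> n" using assms by simp
  have cc: "card {i\<in>{0..<Suc n}-{j}-{n}. tau2 j n x i = 1 \<and> tau2 j n y i = 1} = card {i\<in>{0..<Suc n}-{j}-{n}. x i = 1 \<and> y i = 1}" for x y
    by (rule card_cong_set) (simp add: tau2_def)
  show "d \<le> agree1 (Suc n) (tau2 j n x) (tau2 j n y)"
    if "C2 j n x" "C2 j n y" "d \<le> agree1 (Suc n) x y" for x y
    using that unfolding D cc by (simp add: C2_def tau2_def nj)
  show "d \<le> agree1 (Suc n) (tau2 j n x) y"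
    if "C2 j n x" "C2 j n y" "d \<le> agree1 (Suc n) x (tau2 j n y)" for x y
    using that unfolding D core_tau2 by (simp add: C2_def tau2_def nj)
  show "d \<le> agree1 (Suc n) (tau2 j n x) y"
    if "C2 j n x" "\<not> C2 j n y" "d \<le> agree1 (Suc n) x y" for x y
    using that unfolding D core_tau2 by (auto simp: C2_def tau2_def nj split: if_splits)
qed


lemma tau2_words: "q \<ge> 1 \<Longrightarrow> j < n \<Longrightarrow> x \<in> words q (Suc n) \<Longrightarrow> tau2 j n x \<in> words q (Suc n)"
  unfolding tau2_def
  using words_in[of x q "Suc n" n]
  by (intro words_upd) (auto intro: words_upd)

lemma maxchoice:
  fixes K :: "w set set" and pot :: "w set \<Rightarrow> nat"
  assumes "finite K" "A \<in> K"
  obtains B where "B \<in> K" "\<And>B'. B' \<in> K \<Longrightarrow> pot B' \<le> pot B"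
proof -
  have "Max (pot ` K) \<in> pot ` K" using assms by (intro Max_in) auto
  then obtain B where "B \<in> K" "pot B = Max (pot ` K)" by auto
  then show ?thesis using that assms by auto
qed

lemma keyQ:
  assumes "q \<ge> 2"
  shows "A \<subseteq> words q n \<Longrightarrow> (\<forall>x\<in>A. \<forall>y\<in>A. d \<le> agree1 n x y) \<Longrightarrow> card A * (q-1)^d \<le> q^n"
proof (induction n arbitrary: A d)
  case 0
  show ?case
  proof (cases "d = 0")
    case True
    then show ?thesis using card_mono[OF words_finite 0(1)] words_card[of q 0] by simp
  next
    case False
    then have "A = {}" using 0(2) by (auto simp: agree1_def)
    then show ?thesis by simp
  qed
next
  case (Suc n)
  show ?case
  proof (cases "d = 0")
    case True
    then show ?thesis using card_mono[OF words_finite Suc(2)] words_card[of q "Suc n"] by simp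
  next
    case dpos: False
    define K where "K = {B. B \<subseteq> words q (Suc n) \<and> card B = card A \<and> (\<forall>x\<in>B. \<forall>y\<in>B. d \<le> agree1 (Suc n) x y)}"
    define pot where "pot B = (\<Sum>x\<in>B. (if x n = 1 then 1 else 0::nat))" for B :: "w set"
    have finK: "finite K" unfolding K_def
      by (rule finite_subset[of _ "Pow (words q (Suc n))"]) (auto simp: words_finite)
    have "A \<in> K" using Suc.prems by (auto simp: K_def)
    then obtain B where BK: "B \<in> K" and Bmax: "\<And>B'. B' \<in> K \<Longrightarrow> pot B' \<le> pot B"
      using maxchoice[OF finK] by blast
    have Bw: "B \<subseteq> words q (Suc n)" and Bc: "card B = card A"
      and Bagr: "\<forall>x\<in>B. \<forall>y\<in>B. d \<le> agree1 (Suc n) x y" using BK by (auto simp: K_def)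
    have finB: "finite B" using Bw finite_subset words_finite by blast
    have stab: "tau2 j n x \<in> B" if "j < n" "x \<in> B" "C2 j n x" for j x
    proof (rule ccontr)
      assume nin: "tau2 j n x \<notin> B"
      let ?B' = "shf (C2 j n) (tau2 j n) B ` B"
      have "?B' \<in> K" unfolding K_def
        using shf_card[OF tau2_inj[OF that(1)]] Bc
          shf_sub[OF Bw, of "C2 j n" "tau2 j n"] tau2_words[of q j n] assms that(1)
          tau2_rel[OF that(1) Bagr] by auto
      moreover have "pot B < pot ?B'" unfolding pot_def
        by (rule shf_pot[OF tau2_inj[OF that(1)] finB]) (use that nin in \<open>auto simp: C2_def tau2_def\<close>)
      ultimately show False using Bmax by fastforce
    qed
    define r where "r x = restrict x {0..<n}" for x :: w
    define Ba where "Ba a = {x\<in>B. x n = a}" for a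
    have rinj: "inj_on r (Ba a)" for a
    proof (rule inj_onI)
      fix x y assume xy: "x \<in> Ba a" "y \<in> Ba a" "r x = r y"
      show "x = y"
      proof
        fix i
        show "x i = y i"
        proof (cases "i < n")
          case True then show ?thesis using fun_cong[OF xy(3), of i] by (simp add: r_def)
        next
          case False
          have "x \<in> words q (Suc n)" "y \<in> words q (Suc n)" using xy(1,2) Bw by (auto simp: Ba_def)
          then show ?thesis using False xy(1,2) words_out[of x q "Suc n" i] words_out[of y q "Suc n" i]
            by (cases "i = n") (auto simp: Ba_def)
        qed
      qed
    qed
    have rw: "r ` Ba a \<subseteq> words q n" for a using Bw words_restrict by (auto simp: Ba_def r_def)
    have rag: "agree1 n (r x) (r y) = agree1 n x y" for x y by (simp add: r_def agree1_restrict)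
    have B1: "card (Ba 1) * (q-1)^(d-1) \<le> q^n"
    proof -
      have "\<forall>x\<in>r ` Ba 1. \<forall>y\<in>r ` Ba 1. d - 1 \<le> agree1 n x y"
        using Bagr by (fastforce simp: rag Ba_def agree1_Suc)
      from Suc.IH[OF rw this] show ?thesis using card_image[OF rinj] by simp
    qed
    have Bo: "card (Ba a) * (q-1)^(d+1) \<le> q^n" if "a \<noteq> 1" for a
    proof -
      have "d + 1 \<le> agree1 n x y" if "x \<in> Ba a" "y \<in> Ba a" for x y
      proof (rule ccontr)
        assume "\<not> d + 1 \<le> agree1 n x y"
        moreover have "d \<le> agree1 n x y" using Bagr that \<open>a \<noteq> 1\<close> by (auto simp: Ba_def agree1_Suc)
        ultimately have eq: "agree1 n x y = d" by simp
        then have "{i \<in> {0..<n}. x i = 1 \<and> y i = 1} \<noteq> {}" using dpos eq unfolding agree1_def by (metis card.empty)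
        then obtain j where j: "j < n" "x j = 1" "y j = 1" by auto
        have xB: "x \<in> B" "x n = a" "y \<in> B" "y n = a" using that by (auto simp: Ba_def)
        have "tau2 j n x \<in> B" using stab[OF j(1) xB(1)] j xB \<open>a \<noteq> 1\<close> by (simp add: C2_def)
        then have "d \<le> agree1 (Suc n) (tau2 j n x) y" using Bagr xB by auto
        moreover have "agree1 (Suc n) x y = d" using eq xB \<open>a \<noteq> 1\<close> by (simp add: agree1_Suc)
        moreover have "agree1 (Suc n) (tau2 j n x) y + 1 = agree1 (Suc n) x y"
          unfolding agree1_decomp[OF j(1)] core_tau2 using j xB \<open>a \<noteq> 1\<close> by (simp add: tau2_def)
        ultimately show False by simp
      qed
      then have "\<forall>x\<in>r ` Ba a. \<forall>y\<in>r ` Ba a. d + 1 \<le> agree1 n x y" by (auto simp: rag)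
      from Suc.IH[OF rw this] show ?thesis using card_image[OF rinj] by simp
    qed
    have Bun: "B = (\<Union>a\<in>{1..q}. Ba a)" using Bw words_in[of _ q "Suc n" n] by (auto simp: Ba_def)
    have cB: "card B = (\<Sum>a\<in>{1..q}. card (Ba a))"
      apply (subst Bun, rule card_UN_disjoint)
      using finB by (auto simp: Ba_def)
    also have "\<dots> = card (Ba 1) + (\<Sum>a\<in>{2..q}. card (Ba a))"
    proof -
      have "{1..q} = insert 1 {2..q}" using assms by auto
      then show ?thesis by simp
    qed
    finally have cB2: "card B = card (Ba 1) + (\<Sum>a\<in>{2..q}. card (Ba a))" .
    have S: "(\<Sum>a\<in>{2..q}. card (Ba a)) * (q-1)^(d+1) \<le> (q - 1) * q^n"
    proof -
      have "(\<Sum>a\<in>{2..q}. card (Ba a)) * (q-1)^(d+1) = (\<Sum>a\<in>{2..q}. card (Ba a) * (q-1)^(d+1))"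
        by (simp add: sum_distrib_right)
      also have "\<dots> \<le> (\<Sum>a\<in>{2..q::nat}. q^n)" by (rule sum_mono) (use Bo in auto)
      also have "\<dots> = (q - 1) * q^n" by simp
      finally show ?thesis .
    qed
    have qp: "q - 1 > 0" using assms by simp
    have S2: "(\<Sum>a\<in>{2..q}. card (Ba a)) * (q-1)^d \<le> q^n"
    proof -
      have "(q-1) * ((\<Sum>a\<in>{2..q}. card (Ba a)) * (q-1)^d) \<le> (q - 1) * q^n"
        using S by (simp add: power_Suc mult_ac)
      then show ?thesis using qp by simp
    qed
    have B1': "card (Ba 1) * (q-1)^d \<le> (q-1) * q^n"
    proof -
      have "(q-1)^d = (q-1) * (q-1)^(d-1)" using dpos by (cases d) auto
      then show ?thesis using B1 qp by (simp add: mult_ac)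
    qed
    have "card B * (q-1)^d \<le> (q-1) * q^n + q^n" using cB2 B1' S2 by (simp add: add_mult_distrib)
    also have "\<dots> = q^(Suc n)" using assms by (simp add: algebra_simps)
    finally show ?thesis using Bc by simp
  qed
qed


lemma tau1_rel:
  assumes "i < n"
  shows "\<forall>x\<in>A. \<forall>y\<in>A. d \<le> agree n x y \<Longrightarrow>
     \<forall>x\<in>shf (\<lambda>x. x i = a) (\<lambda>x. x(i := 1)) A ` A. \<forall>y\<in>shf (\<lambda>x. x i = a) (\<lambda>x. x(i := 1)) A ` A. d \<le> agree n x y"
proof (rule shf_rel)
  have sy: "agree m x y = agree m y x" for m x y unfolding agree_def by (rule card_cong_set) auto
  show "d \<le> agree n y x" if "d \<le> agree n x y" for x y using that sy by simp
  have D: "agree n x y = card {k\<in>{0..<n}-{i}. x k = y k} + (if x i = y i then 1 else 0)" for x y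
    unfolding agree_def by (rule card_split) (use assms in auto)
  have cc: "card {k\<in>{0..<n}-{i}. (x(i:=u)) k = (y(i:=v)) k} = card {k\<in>{0..<n}-{i}. x k = y k}" for x y u v
    by (rule card_cong_set) simp
  have cc1: "card {k\<in>{0..<n}-{i}. (x(i:=u)) k = y k} = card {k\<in>{0..<n}-{i}. x k = y k}" for x y u
    by (rule card_cong_set) simp
  have cc2: "card {k\<in>{0..<n}-{i}. x k = (y(i:=u)) k} = card {k\<in>{0..<n}-{i}. x k = y k}" for x y u
    by (rule card_cong_set) simp
  show "d \<le> agree n (x(i:=1)) (y(i:=1))" if "x i = a" "y i = a" "d \<le> agree n x y" for x y
    using that unfolding D cc by simp
  show "d \<le> agree n (x(i:=1)) y" if "x i = a" "y i = a" "d \<le> agree n x (y(i:=1))" for x y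
    using that unfolding D cc1 cc2 by (auto split: if_splits)
  show "d \<le> agree n (x(i:=1)) y" if "x i = a" "\<not> y i = a" "d \<le> agree n x y" for x y
    using that unfolding D cc1 by (auto split: if_splits)
qed

lemma tau1_inj: fixes i a :: nat shows "inj_on (\<lambda>x. x(i := 1)) {x. x i = a}"
proof (rule inj_onI)
  fix x y :: w assume xy: "x \<in> {x. x i = a}" "y \<in> {x. x i = a}" and eq: "x(i := 1) = y(i := 1)"
  have e3: "x k = y k" if "k \<noteq> i" for k using fun_cong[OF eq, of k] that by simp
  have e: "x i = a" "y i = a" "\<And>k. k \<noteq> i \<Longrightarrow> x k = y k" using xy e3 by auto
  show "x = y"
  proof
    fix k show "x k = y k" using e by (cases "k = i") auto
  qed
qed

lemma stable_fill:
  assumes st: "\<And>x k. x \<in> A \<Longrightarrow> k < n \<Longrightarrow> x k \<noteq> 1 \<Longrightarrow> x(k := 1) \<in> A"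
    and y: "y \<in> A"
  shows "finite E \<Longrightarrow> E \<subseteq> {0..<n} \<Longrightarrow> (\<lambda>k. if k \<in> E \<and> y k \<noteq> 1 then 1 else y k) \<in> A"
proof (induction E rule: finite_induct)
  case empty
  then show ?case using y by simp
next
  case (insert e E)
  let ?z = "\<lambda>k. if k \<in> E \<and> y k \<noteq> 1 then 1 else y k"
  have z: "?z \<in> A" using insert by auto
  show ?case
  proof (cases "y e = 1")
    case True
    have "(\<lambda>k. if k \<in> insert e E \<and> y k \<noteq> 1 then 1 else y k) = ?z" using True by auto
    then show ?thesis using z by simp
  next
    case False
    have "(\<lambda>k. if k \<in> insert e E \<and> y k \<noteq> 1 then 1 else y k) = ?z(e := 1)" using False by auto
    moreover have "?z(e := 1) \<in> A" using st[OF z, of e] insert False by auto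
    ultimately show ?thesis by simp
  qed
qed

lemma to_agree1:
  assumes st: "\<And>x k. x \<in> A \<Longrightarrow> k < n \<Longrightarrow> x k \<noteq> 1 \<Longrightarrow> x(k := 1) \<in> A"
    and R: "\<forall>x\<in>A. \<forall>y\<in>A. d \<le> agree n x y"
    and x: "x \<in> A" and y: "y \<in> A"
  shows "d \<le> agree1 n x y"
proof -
  define E where "E = {k\<in>{0..<n}. y k = x k}"
  let ?y = "\<lambda>k. if k \<in> E \<and> y k \<noteq> 1 then 1 else y k"
  have "?y \<in> A" by (rule stable_fill[OF st y]) (auto simp: E_def)
  then have "d \<le> agree n x ?y" using R x by blast
  moreover have "agree n x ?y = agree1 n x y"
    unfolding agree_def agree1_def by (rule card_cong_set) (auto simp: E_def)
  ultimately show ?thesis by simp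
qed

lemma card_bound:
  fixes q n d :: nat and A :: "w set"
  assumes "q \<ge> 2" "A \<subseteq> words q n" "\<And>x y. x \<in> A \<Longrightarrow> y \<in> A \<Longrightarrow> agree n x y \<ge> d"
  shows "card A * (q-1)^d \<le> q^n"
proof -
  define K where "K = {B. B \<subseteq> words q n \<and> card B = card A \<and> (\<forall>x\<in>B. \<forall>y\<in>B. d \<le> agree n x y)}"
  define pot where "pot B = (\<Sum>x\<in>B. card {k\<in>{0..<n}. x k = 1})" for B :: "w set"
  have finK: "finite K" unfolding K_def
    by (rule finite_subset[of _ "Pow (words q n)"]) (auto simp: words_finite)
  have "A \<in> K" using assms by (auto simp: K_def)
  then obtain B where BK: "B \<in> K" and Bmax: "\<And>B'. B' \<in> K \<Longrightarrow> pot B' \<le> pot B"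
    using maxchoice[OF finK] by blast
  have Bw: "B \<subseteq> words q n" and Bc: "card B = card A"
    and Bagr: "\<forall>x\<in>B. \<forall>y\<in>B. d \<le> agree n x y" using BK by (auto simp: K_def)
  have finB: "finite B" using Bw finite_subset words_finite by blast
  have stab: "x(i := 1) \<in> B" if "x \<in> B" "i < n" "x i \<noteq> 1" for x i
  proof (rule ccontr)
    assume nin: "x(i := 1) \<notin> B"
    define a where "a = x i"
    let ?B' = "shf (\<lambda>x. x i = a) (\<lambda>x. x(i := 1)) B ` B"
    have ww: "z(i := 1) \<in> words q n" if "z \<in> words q n" for z
      using words_upd[OF that \<open>i < n\<close>, of 1] assms(1) by simp
    have "?B' \<in> K" unfolding K_def
      using shf_card[OF tau1_inj] Bc
        shf_sub[OF Bw, of "\<lambda>x. x i = a" "\<lambda>x. x(i := 1)"] ww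
        tau1_rel[OF that(2) Bagr] by auto
    moreover have "pot B < pot ?B'" unfolding pot_def
    proof (rule shf_pot[OF tau1_inj finB])
      show "\<exists>x\<in>B. x i = a \<and> x(i := 1) \<notin> B" using that nin a_def by blast
      fix z :: w assume za: "z i = a"
      have "card {k\<in>{0..<n}. z k = 1} = card {k\<in>{0..<n}-{i}. z k = 1} + 0"
        using card_split[of "{0..<n}" i "\<lambda>k. z k = 1"] za that a_def by simp
      moreover have "card {k\<in>{0..<n}. (z(i:=1)) k = 1} = card {k\<in>{0..<n}-{i}. (z(i:=1)) k = 1} + 1"
        using card_split[of "{0..<n}" i "\<lambda>k. (z(i:=1)) k = 1"] that by simp
      moreover have "card {k\<in>{0..<n}-{i}. (z(i:=1)) k = 1} = card {k\<in>{0..<n}-{i}. z k = 1}"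
        by (rule card_cong_set) simp
      ultimately show "card {k\<in>{0..<n}. z k = 1} < card {k\<in>{0..<n}. (z(i:=1)) k = 1}" by simp
    qed
    ultimately show False using Bmax by fastforce
  qed
  have "\<forall>x\<in>B. \<forall>y\<in>B. d \<le> agree1 n x y"
    using to_agree1[OF stab Bagr] by blast
  from keyQ[OF assms(1) Bw this] show ?thesis using Bc by simp
qed

theorem theorem1p3:
  fixes q n d :: nat and A :: "(nat \<Rightarrow> nat) set"
  assumes "q \<ge> 3" and "1 \<le> d" and "3 * d \<le> n"
    and "A \<subseteq> words q n"
    and "\<And>x y. x \<in> A \<Longrightarrow> y \<in> A \<Longrightarrow> agree n x y \<ge> d"
  shows "real (card A) < real q powr (real n - real d / 10)"
proof -
  have cb: "card A * (q-1)^d \<le> q^n" using card_bound[of q A n d] assms by simp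
  have q1: "real (q - 1) = real q - 1" using assms by simp
  have cbr: "real (card A) * (real q - 1)^d \<le> real q ^ n"
    using cb q1 by (metis of_nat_le_iff of_nat_mult of_nat_power)
  have qpos: "real q > 0" using assms by simp
  have key: "real q < (real q - 1)^10"
  proof -
    have q3: "real q \<ge> 3" using assms by simp
    have "real q * (real q - 3) \<ge> 0" using q3 by simp
    then have "real q < (real q - 1)^2" by (simp add: power2_eq_square algebra_simps)
    also have "\<dots> \<le> (real q - 1)^10" using assms by (intro power_increasing) auto
    finally show ?thesis .
  qed
  have "real q powr (real d / 10) < ((real q - 1)^10) powr (real d / 10)"
    using key qpos assms(2) by (intro powr_less_mono2) auto
  also have "\<dots> = (real q - 1)^d"
  proof -
    have "((real q - 1)^10) powr (real d / 10) = ((real q - 1) powr 10) powr (real d / 10)"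
    proof -
      have "(real q - 1) powr (real (10::nat)) = (real q - 1)^10" using assms by (intro powr_realpow) auto
      then show ?thesis by simp
    qed
    also have "\<dots> = (real q - 1) powr (real d)" by (simp add: powr_powr)
    also have "\<dots> = (real q - 1)^d" using assms by (subst powr_realpow) auto
    finally show ?thesis .
  qed
  finally have lt: "real q powr (real d / 10) < (real q - 1)^d" .
  have "real q powr (real n - real d / 10) = real q ^ n / real q powr (real d / 10)"
    using qpos by (simp add: powr_diff powr_realpow)
  moreover have "real (card A) < real q ^ n / real q powr (real d / 10)"
  proof -
    have pp: "real q powr (real d / 10) > 0" using qpos by simp
    have "real (card A) * real q powr (real d / 10) \<le> real (card A) * (real q - 1)^d"
      using lt by (intro mult_left_mono) auto
    also have "\<dots> \<le> real q ^ n" by (rule cbr)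
    finally have le: "real (card A) * real q powr (real d / 10) \<le> real q ^ n" .
    show ?thesis
    proof (cases "card A = 0")
      case True then show ?thesis using pp qpos by simp
    next
      case False
      then have "real (card A) * real q powr (real d / 10) < real (card A) * (real q - 1)^d"
        using lt by simp
      then have "real (card A) * real q powr (real d / 10) < real q ^ n" using cbr by linarith
      then show ?thesis using pp by (simp add: pos_less_divide_eq)
    qed
  qed
  ultimately show ?thesis by simp
qed

end
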